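(* For each $n$ let $p=p_n\in(0,1)$, let $X\sim\mathrm{Bin}(n,p)$ and $R = R_n = 1 + X + \frac{X(X-1)}{2}$. If $p(1-p)^{1/3} \gg n^{-1/9}$, i.e. $n^{1/9}p_n(1-p_n)^{1/3}\to\infty$ as $n\to\infty$, then $$\lim_{n\to\infty}\sup_{w\in\mathbb{R}}\left|\mathbb{P}\left(\frac{R-\mathbb{E}(R)}{\sqrt{\mathbb{V}(R)}}\le w\right) - \Phi(w)\right| = 0,$$ where $\Phi$ is the standard normal distribution function.
   Context: $\mathbb{V}$ denotes variance. $R$ is the number of regions formed when $n$ cuts are attempted on a pizza, each succeeding independently with probability $p$, with every successful cut meeting all prior successful cuts. The notation $a_n\gg b_n$ means $a_n/b_n\to\infty$. *)

theory Defs
  imports "HOL-Probability.Probability"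
begin

text \<open>Number of pizza regions when X cuts succeed: R = 1 + X + X(X-1)/2.\<close>
definition regions :: "nat \<Rightarrow> real" where
  "regions X = 1 + real X + real X * (real X - 1) / 2"

definition Phi :: "real \<Rightarrow> real" where
  "Phi w = cdf std_normal_distribution w"

end

theory Submission
  imports Defs
begin

lemma binom_fact_moment:
  fixes p :: real
  shows "(\<Sum>k\<le>n. real (n choose k) * p^k * (1-p)^(n-k) * real (k choose r)) = real (n choose r) * p^r"
proof (cases "r \<le> n")
  case False
  then show ?thesis by (auto intro!: sum.neutral simp: binomial_eq_0)
next
  case True
  define f where "f k = real (n choose k) * p^k * (1-p)^(n-k) * real (k choose r)" for k
  have "(\<Sum>k\<le>n. f k) = (\<Sum>k\<in>{r..n}. f k)"
    by (rule sum.mono_neutral_right) (auto simp: f_def binomial_eq_0)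
  also have "{r..n} = {0+r..(n-r)+r}" using True by simp
  also have "(\<Sum>k\<in>{0+r..(n-r)+r}. f k) = (\<Sum>j\<in>{0..n-r}. f (j + r))"
    by (rule sum.shift_bounds_cl_nat_ivl)
  also have "\<dots> = (\<Sum>j\<le>n-r. real (n choose r) * p^r * (real (n - r choose j) * p^j * (1-p)^(n-r-j)))"
  proof (rule sum.cong)
    fix j assume j: "j \<in> {..n-r}"
    have "(n choose (j+r)) * ((j+r) choose r) = (n choose r) * ((n - r) choose (j + r - r))"
      using j True by (intro choose_mult) auto
    then have e: "real (n choose (j+r)) * real ((j+r) choose r) = real (n choose r) * real ((n - r) choose j)"
      by (metis add_diff_cancel_right' of_nat_mult)
    have "n - (j + r) = n - r - j" by simp
    then show "f (j + r) = real (n choose r) * p^r * (real (n - r choose j) * p^j * (1-p)^(n-r-j))"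
      unfolding f_def using e by (simp add: power_add algebra_simps)
  qed (auto simp: atLeast0AtMost)
  also have "\<dots> = real (n choose r) * p^r * (p + (1 - p))^(n-r)"
    unfolding binomial_ring[of p "1-p" "n-r"] by (simp add: sum_distrib_left mult.assoc)
  finally show ?thesis by (simp add: f_def)
qed

lemma real_choose_2: "real (k choose 2) = real k * (real k - 1) / 2"
  by (simp add: binomial_gbinomial gbinomial_prod_rev numeral_2_eq_2)
lemma real_choose_3: "real (k choose 3) = real k * (real k - 1) * (real k - 2) / 6"
  by (simp add: binomial_gbinomial gbinomial_altdef_of_nat eval_nat_numeral prod.atLeast0_lessThan_Suc)
lemma real_choose_4: "real (k choose 4) = real k * (real k - 1) * (real k - 2) * (real k - 3) / 24"
  by (simp add: binomial_gbinomial gbinomial_altdef_of_nat eval_nat_numeral prod.atLeast0_lessThan_Suc)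

lemma binom_poly4:
  fixes p :: real
  shows "(\<Sum>k\<le>n. real (n choose k) * p^k * (1-p)^(n-k) *
           (ca + cb * real k + cc * real k^2 + cd * real k^3 + ce * real k^4)) =
     ca + cb * (real n * p) + cc * (real n * (real n - 1) * p^2 + real n * p)
     + cd * (real n * (real n - 1) * (real n - 2) * p^3 + 3 * real n * (real n - 1) * p^2 + real n * p)
     + ce * (real n * (real n - 1) * (real n - 2) * (real n - 3) * p^4
             + 6 * real n * (real n - 1) * (real n - 2) * p^3 + 7 * real n * (real n - 1) * p^2 + real n * p)"
proof -
  define W where "W k = real (n choose k) * p^k * (1-p)^(n-k)" for k
  define b1 where "b1 = cb + cc + cd + ce"
  define b2 where "b2 = 2*cc + 6*cd + 14*ce"
  define b3 where "b3 = 6*cd + 36*ce"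
  define b4 where "b4 = 24*ce"
  have pw: "ca + cb * real k + cc * real k^2 + cd * real k^3 + ce * real k^4 =
      ca * real (k choose 0) + b1 * real (k choose 1) + b2 * real (k choose 2)
      + b3 * real (k choose 3) + b4 * real (k choose 4)" for k
    unfolding real_choose_2 real_choose_3 real_choose_4 b1_def b2_def b3_def b4_def
    by (simp add: field_simps power2_eq_square power3_eq_cube power4_eq_xxxx)
  have M: "(\<Sum>k\<le>n. W k * real (k choose r)) = real (n choose r) * p^r" for r
    using binom_fact_moment[of n p r] by (simp add: W_def)
  have "(\<Sum>k\<le>n. W k * (ca + cb * real k + cc * real k^2 + cd * real k^3 + ce * real k^4))
     = (\<Sum>k\<le>n. ca * (W k * real (k choose 0)) + b1 * (W k * real (k choose 1)) + b2 * (W k * real (k choose 2))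
      + b3 * (W k * real (k choose 3)) + b4 * (W k * real (k choose 4)))"
    unfolding pw by (simp add: algebra_simps)
  also have "\<dots> = ca * real (n choose 0) * p^0 + b1 * (real (n choose 1) * p^1) + b2 * (real (n choose 2) * p^2)
      + b3 * (real (n choose 3) * p^3) + b4 * (real (n choose 4) * p^4)"
    by (simp only: sum.distrib sum_distrib_left[symmetric] M)
  finally show ?thesis
    unfolding W_def real_choose_2 real_choose_3 real_choose_4 b1_def b2_def b3_def b4_def
    by (simp add: field_simps power2_eq_square power3_eq_cube power4_eq_xxxx)
qed
lemma binom_expect:
  fixes f :: "nat \<Rightarrow> real"
  assumes "0 \<le> p" "p \<le> 1"
  shows "measure_pmf.expectation (binomial_pmf n p) f = (\<Sum>k\<le>n. real (n choose k) * p^k * (1-p)^(n-k) * f k)"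
  using assms by (subst expectation_binomial_pmf') auto

lemma binom_poly_expect:
  fixes p :: real
  assumes "0 \<le> p" "p \<le> 1"
  assumes "\<And>k. f k = ca + cb * real k + cc * real k^2 + cd * real k^3 + ce * real k^4"
  shows "measure_pmf.expectation (binomial_pmf n p) f =
     ca + cb * (real n * p) + cc * (real n * (real n - 1) * p^2 + real n * p)
     + cd * (real n * (real n - 1) * (real n - 2) * p^3 + 3 * real n * (real n - 1) * p^2 + real n * p)
     + ce * (real n * (real n - 1) * (real n - 2) * (real n - 3) * p^4
             + 6 * real n * (real n - 1) * (real n - 2) * p^3 + 7 * real n * (real n - 1) * p^2 + real n * p)"
  unfolding binom_expect[OF assms(1,2)] assms(3) by (rule binom_poly4)

lemma regions_mean:
  fixes p :: real
  assumes "0 \<le> p" "p \<le> 1"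
  shows "measure_pmf.expectation (binomial_pmf n p) regions = 1 + (real n*p*(1-p) + (real n*p)^2 + real n*p)/2"
  by (subst binom_poly_expect[OF assms, where ca=1 and cb="1/2" and cc="1/2" and cd=0 and ce=0])
     (auto simp: regions_def field_simps power2_eq_square)

lemma regions_var:
  fixes p :: real
  assumes "0 \<le> p" "p \<le> 1"
  shows "measure_pmf.variance (binomial_pmf n p) regions = real n*p*(1-p)/4 * ((2*real n*p+1)^2 + 2*(1-2*p)*(2*real n*p+1) + 2*real n*p*(1-p) + 1 - 6*p*(1-p))"
proof -
  define m where "m = 1 + (real n*p*(1-p) + (real n*p)^2 + real n*p)/2"
  have "measure_pmf.variance (binomial_pmf n p) regions = measure_pmf.expectation (binomial_pmf n p) (\<lambda>k. (regions k - m)^2)"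
    using regions_mean[OF assms] m_def by simp
  also have "\<dots> = (1-m)^2 + (1-m) * (real n * p) + ((1-m) + 1/4) * (real n * (real n - 1) * p^2 + real n * p)
     + 1/2 * (real n * (real n - 1) * (real n - 2) * p^3 + 3 * real n * (real n - 1) * p^2 + real n * p)
     + 1/4 * (real n * (real n - 1) * (real n - 2) * (real n - 3) * p^4
             + 6 * real n * (real n - 1) * (real n - 2) * p^3 + 7 * real n * (real n - 1) * p^2 + real n * p)"
    by (rule binom_poly_expect[OF assms]) (simp add: regions_def field_simps power2_eq_square power3_eq_cube power4_eq_xxxx)
  also have "\<dots> = real n*p*(1-p)/4 * ((2*real n*p+1)^2 + 2*(1-2*p)*(2*real n*p+1) + 2*real n*p*(1-p) + 1 - 6*p*(1-p))"
    unfolding m_def by (simp add: field_simps power2_eq_square power3_eq_cube power4_eq_xxxx)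
  finally show ?thesis .
qed

lemma binom_var:
  fixes p :: real
  assumes "0 \<le> p" "p \<le> 1"
  shows "measure_pmf.expectation (binomial_pmf n p) (\<lambda>k. (real k - real n * p)^2) = real n*p*(1-p)"
  by (subst binom_poly_expect[OF assms, where ca="(real n*p)^2" and cb="-2*real n*p" and cc=1 and cd=0 and ce=0])
     (auto simp: field_simps power2_eq_square)



lemma iexp2: "cmod (iexp x - (1 + \<i> * complex_of_real x - complex_of_real (x^2 / 2))) \<le> \<bar>x\<bar>^3 / 6"
proof -
  have "(\<Sum>k\<le>2. (\<i> * complex_of_real x) ^ k / fact k) = 1 + \<i> * complex_of_real x - complex_of_real (x^2 / 2)"
    by (simp add: eval_nat_numeral power2_eq_square algebra_simps)
  moreover have "fact (Suc 2) = (6::real)" by (simp add: eval_nat_numeral)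
  ultimately show ?thesis using iexp_approx1[of x 2] by simp
qed

lemma phi_approx:
  fixes p u :: real
  assumes p: "0 \<le> p" "p \<le> 1"
  shows "cmod ((complex_of_real p * iexp (u * (1 - p)) + complex_of_real (1 - p) * iexp (- (u * p)))
              - complex_of_real (1 - p * (1 - p) * u^2 / 2)) \<le> p * (1 - p) * \<bar>u\<bar>^3 / 6"
proof -
  define q where "q = 1 - p"
  have q: "0 \<le> q" "q \<le> 1" "p + q = 1" using p by (auto simp: q_def)
  define T where "T x = 1 + \<i> * complex_of_real x - complex_of_real (x^2 / 2)" for x
  have id: "(complex_of_real p * iexp (u * q) + complex_of_real q * iexp (- (u * p)))
              - complex_of_real (1 - p * q * u^2 / 2)
          = complex_of_real p * (iexp (u * q) - T (u * q)) + complex_of_real q * (iexp (- (u * p)) - T (- (u * p)))"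
  proof -
    have "complex_of_real p * T (u * q) + complex_of_real q * T (- (u * p)) = complex_of_real (1 - p * q * u^2 / 2)"
    proof -
      have "complex_of_real p * T (u * q) + complex_of_real q * T (- (u * p))
          = complex_of_real (p + q) + \<i> * complex_of_real (p * (u * q) - q * (u * p))
            - complex_of_real (p * q * u^2 / 2 * (p + q))"
        unfolding T_def by (simp add: algebra_simps power2_eq_square)
      also have "\<dots> = complex_of_real (1 - p * q * u^2 / 2)"
        using q(3) by (simp add: algebra_simps)
      finally show ?thesis .
    qed
    then show ?thesis by (simp add: algebra_simps)
  qed
  have "cmod (complex_of_real p * (iexp (u * q) - T (u * q)) + complex_of_real q * (iexp (- (u * p)) - T (- (u * p))))
      \<le> p * (\<bar>u * q\<bar>^3 / 6) + q * (\<bar>- (u * p)\<bar>^3 / 6)"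
  proof -
    have b1: "cmod (iexp (u * q) - T (u * q)) \<le> \<bar>u * q\<bar>^3 / 6" using iexp2[of "u * q"] by (simp add: T_def)
    have b2: "cmod (iexp (- (u * p)) - T (- (u * p))) \<le> \<bar>- (u * p)\<bar>^3 / 6" using iexp2[of "- (u * p)"] by (simp only: T_def)
    have "cmod (complex_of_real p * (iexp (u * q) - T (u * q)) + complex_of_real q * (iexp (- (u * p)) - T (- (u * p))))
      \<le> cmod (complex_of_real p * (iexp (u * q) - T (u * q))) + cmod (complex_of_real q * (iexp (- (u * p)) - T (- (u * p))))"
      by (rule norm_triangle_ineq)
    also have "\<dots> = p * cmod (iexp (u * q) - T (u * q)) + q * cmod (iexp (- (u * p)) - T (- (u * p)))"
      using p q by (simp only: norm_mult norm_of_real abs_of_nonneg)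
    also have "\<dots> \<le> p * (\<bar>u * q\<bar>^3 / 6) + q * (\<bar>- (u * p)\<bar>^3 / 6)"
      using b1 b2 p q by (intro add_mono mult_left_mono) auto
    finally show ?thesis .
  qed
  also have "\<dots> = p * q * \<bar>u\<bar>^3 / 6 * (q^2 + p^2)"
    using p q by (simp add: abs_mult power_mult_distrib algebra_simps power2_eq_square power3_eq_cube)
  also have "\<dots> \<le> p * q * \<bar>u\<bar>^3 / 6 * 1"
  proof (rule mult_left_mono)
    have "(p+q)^2 = p^2 + q^2 + 2*(p*q)" by (simp add: power2_eq_square algebra_simps)
    moreover have "0 \<le> p * q" using p q by simp
    ultimately show "q^2 + p^2 \<le> 1" using q(3) by simp
  qed (use p q in auto)
  finally show ?thesis using id by (simp add: q_def)
qed

lemma phi_norm: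
  fixes p u :: real
  assumes p: "0 \<le> p" "p \<le> 1"
  shows "cmod (complex_of_real p * iexp (u * (1 - p)) + complex_of_real (1 - p) * iexp (- (u * p))) \<le> 1"
proof -
  have "cmod (complex_of_real p * iexp (u * (1 - p)) + complex_of_real (1 - p) * iexp (- (u * p)))
     \<le> cmod (complex_of_real p * iexp (u * (1 - p))) + cmod (complex_of_real (1 - p) * iexp (- (u * p)))"
    by (rule norm_triangle_ineq)
  also have "\<dots> = p + (1 - p)" using p by (simp add: norm_mult del: of_real_diff)
  finally show ?thesis by simp
qed

lemma binom_char:
  fixes p s t :: real
  assumes p: "0 \<le> p" "p \<le> 1"
  shows "char (distr (measure_pmf (binomial_pmf n p)) borel (\<lambda>k. (real k - real n * p) / s)) t
     = (complex_of_real p * iexp (t / s * (1 - p)) + complex_of_real (1 - p) * iexp (- (t / s * p))) ^ n"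
proof -
  define u where "u = t / s"
  have "char (distr (measure_pmf (binomial_pmf n p)) borel (\<lambda>k. (real k - real n * p) / s)) t
      = measure_pmf.expectation (binomial_pmf n p) (\<lambda>k. iexp (t * ((real k - real n * p) / s)))"
    unfolding char_def by (subst integral_distr) (auto simp: measurable_pmf_measure1)
  also have "\<dots> = (\<Sum>k\<le>n. (real (n choose k) * p ^ k * (1 - p) ^ (n - k)) *\<^sub>R iexp (t * ((real k - real n * p) / s)))"
    using p by (subst expectation_binomial_pmf') auto
  also have "\<dots> = (\<Sum>k\<le>n. of_nat (n choose k) * (complex_of_real p * iexp (u * (1 - p))) ^ k
                  * (complex_of_real (1 - p) * iexp (- (u * p))) ^ (n - k))"
  proof (rule sum.cong)
    fix k assume k: "k \<in> {..n}"
    have e1: "iexp (u * (1 - p)) ^ k = exp (of_nat k * (\<i> * complex_of_real (u * (1 - p))))"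
      by (rule exp_of_nat_mult[symmetric])
    have e2: "iexp (- (u * p)) ^ (n - k) = exp (of_nat (n - k) * (\<i> * complex_of_real (- (u * p))))"
      by (rule exp_of_nat_mult[symmetric])
    have arg: "of_nat k * (\<i> * complex_of_real (u * (1 - p))) + of_nat (n - k) * (\<i> * complex_of_real (- (u * p)))
        = \<i> * complex_of_real (t * ((real k - real n * p) / s))"
    proof -
      have "real k * (u * (1 - p)) + real (n - k) * (- (u * p)) = t * ((real k - real n * p) / s)"
        using k by (simp add: u_def of_nat_diff algebra_simps flip: add_divide_distrib diff_divide_distrib)
      then have "complex_of_real (real k * (u * (1 - p)) + real (n - k) * (- (u * p))) = complex_of_real (t * ((real k - real n * p) / s))"
        by simp
      then show ?thesis by (simp add: algebra_simps)
    qed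
    show "(real (n choose k) * p ^ k * (1 - p) ^ (n - k)) *\<^sub>R iexp (t * ((real k - real n * p) / s))
       = of_nat (n choose k) * (complex_of_real p * iexp (u * (1 - p))) ^ k
                  * (complex_of_real (1 - p) * iexp (- (u * p))) ^ (n - k)"
    proof -
      have "of_nat (n choose k) * (complex_of_real p * iexp (u * (1 - p))) ^ k
                  * (complex_of_real (1 - p) * iexp (- (u * p))) ^ (n - k)
          = complex_of_real (real (n choose k) * p ^ k * (1 - p) ^ (n - k)) *
            (exp (of_nat k * (\<i> * complex_of_real (u * (1 - p)))) * exp (of_nat (n - k) * (\<i> * complex_of_real (- (u * p)))))"
        unfolding power_mult_distrib e1 e2 by (simp add: mult_ac)
      also have "\<dots> = complex_of_real (real (n choose k) * p ^ k * (1 - p) ^ (n - k)) * iexp (t * ((real k - real n * p) / s))"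
        unfolding mult_exp_exp arg ..
      finally have eq: "of_nat (n choose k) * (complex_of_real p * iexp (u * (1 - p))) ^ k
                  * (complex_of_real (1 - p) * iexp (- (u * p))) ^ (n - k) = complex_of_real (real (n choose k) * p ^ k * (1 - p) ^ (n - k)) * iexp (t * ((real k - real n * p) / s))" .
      show ?thesis by (simp only: scaleR_conv_of_real eq)
    qed
  qed simp
  also have "\<dots> = (complex_of_real p * iexp (u * (1 - p)) + complex_of_real (1 - p) * iexp (- (u * p))) ^ n"
    by (rule binomial_ring[symmetric])
  finally show ?thesis by (simp add: u_def)
qed


lemma char_conv:
  fixes p :: "nat \<Rightarrow> real"
  assumes p: "\<And>n. 0 < p n \<and> p n < 1"
  and sig: "filterlim (\<lambda>n. real n * p n * (1 - p n)) at_top sequentially"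
  shows "(\<lambda>n. char (distr (measure_pmf (binomial_pmf n (p n))) borel
            (\<lambda>k. (real k - real n * p n) / sqrt (real n * p n * (1 - p n)))) t) \<longlonglongrightarrow> char std_normal_distribution t"
proof -
  define \<sigma> where "\<sigma> n = sqrt (real n * p n * (1 - p n))" for n
  define \<phi> where "\<phi> n = char (distr (measure_pmf (binomial_pmf n (p n))) borel
            (\<lambda>k. (real k - real n * p n) / \<sigma> n)) t" for n
  have main: "\<forall>\<^sub>F n in sequentially. norm (\<phi> n - (complex_of_real (1 + (-(t^2) / 2) / real n))^n) \<le> \<bar>t\<bar>^3 / (6 * \<sigma> n)"
  proof (rule eventually_sequentiallyI)
    fix n :: nat
    assume n: "n \<ge> max 1 (nat (ceiling (t^2 / 4)))"
    have n1: "real n \<ge> 1" using n by simp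
    have nt0: "nat (ceiling (t^2 / 4)) \<le> n" using n by simp
    have nt: "real n \<ge> t^2 / 4" using nt0 by (simp only: nat_ceiling_le_eq)
    define q where "q = 1 - p n"
    have pq: "0 < p n" "p n < 1" "0 < q" using p[of n] by (auto simp: q_def)
    have s2: "\<sigma> n ^ 2 = real n * p n * q" using pq n1 by (simp add: \<sigma>_def q_def)
    have spos: "\<sigma> n > 0" using pq n1 by (simp add: \<sigma>_def q_def)
    define u where "u = t / \<sigma> n"
    have pqu: "p n * q * u^2 = t^2 / real n"
      using s2 spos pq n1 by (simp add: u_def power_divide)
    have eq: "\<phi> n = (complex_of_real (p n) * iexp (u * (1 - p n)) + complex_of_real (1 - p n) * iexp (- (u * p n))) ^ n"
      unfolding \<phi>_def u_def using pq by (intro binom_char) auto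
    have "norm (\<phi> n - (complex_of_real (1 + (-(t^2) / 2) / real n))^n)
        \<le> real n * norm ((complex_of_real (p n) * iexp (u * (1 - p n)) + complex_of_real (1 - p n) * iexp (- (u * p n)))
               - complex_of_real (1 + (-(t^2) / 2) / real n))"
      unfolding eq
    proof (rule norm_power_diff)
      show "cmod (complex_of_real (p n) * iexp (u * (1 - p n)) + complex_of_real (1 - p n) * iexp (- (u * p n))) \<le> 1"
        using pq by (intro phi_norm) auto
      have "t^2 / real n \<le> 4" using nt n1 by (simp add: divide_le_eq)
      moreover have "0 \<le> t^2 / real n" by simp
      ultimately show "cmod (complex_of_real (1 + (-(t^2) / 2) / real n)) \<le> 1"
        unfolding norm_of_real abs_le_iff by linarith
    qed
    also have conv: "1 + (-(t^2) / 2) / real n = 1 - p n * (1 - p n) * u^2 / 2"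
      using pqu by (simp add: q_def)
    also have "real n * norm ((complex_of_real (p n) * iexp (u * (1 - p n)) + complex_of_real (1 - p n) * iexp (- (u * p n)))
               - complex_of_real (1 - p n * (1 - p n) * u^2 / 2)) \<le> real n * (p n * (1 - p n) * \<bar>u\<bar>^3 / 6)"
      using pq by (intro mult_left_mono phi_approx) auto
    also have "real n * (p n * (1 - p n) * \<bar>u\<bar>^3 / 6) = \<sigma> n ^ 2 * \<bar>t\<bar>^3 / (6 * \<sigma> n ^ 3)"
    proof -
      have "real n * (p n * (1 - p n) * \<bar>u\<bar>^3 / 6) = (real n * p n * q) * \<bar>u\<bar>^3 / 6" by (simp add: q_def)
      also have "\<dots> = \<sigma> n ^ 2 * \<bar>t\<bar>^3 / (6 * \<sigma> n ^ 3)" using s2 spos by (simp add: u_def abs_divide power_divide)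
      finally show ?thesis .
    qed
    also have "\<dots> = \<bar>t\<bar>^3 / (6 * \<sigma> n)"
      using spos by (simp add: power2_eq_square power3_eq_cube)
    finally show "norm (\<phi> n - (complex_of_real (1 + (-(t^2) / 2) / real n))^n) \<le> \<bar>t\<bar>^3 / (6 * \<sigma> n)"
      unfolding conv .
  qed
  have sig_inf: "filterlim \<sigma> at_top sequentially"
    unfolding \<sigma>_def by (rule filterlim_compose[OF sqrt_at_top sig])
  have bound0: "(\<lambda>n. \<bar>t\<bar>^3 / (6 * \<sigma> n)) \<longlonglongrightarrow> 0"
    by (intro tendsto_divide_0[OF tendsto_const] filterlim_at_top_imp_at_infinity filterlim_tendsto_pos_mult_at_top[OF tendsto_const _ sig_inf]) auto
  have "(\<lambda>n. complex_of_real ((1 + (-(t^2) / 2) / real n)^n)) \<longlonglongrightarrow> complex_of_real (exp (-(t^2) / 2))"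
    by (rule isCont_tendsto_compose [OF _ tendsto_exp_limit_sequentially]) auto
  then have "(\<lambda>n. \<phi> n) \<longlonglongrightarrow> complex_of_real (exp (-(t^2) / 2))"
    by (rule Lim_transform) (rule Lim_null_comparison [OF main[folded of_real_power] bound0])
  then show ?thesis
    by (simp add: \<phi>_def \<sigma>_def char_std_normal_distribution)
qed



lemma std_density_le1: "std_normal_density x \<le> 1"
proof -
  have "exp (- x\<^sup>2 / 2) \<le> 1" by simp
  moreover have "1 / sqrt (2 * pi) \<le> 1" using pi_gt3 by (simp add: divide_le_eq)
  ultimately have "(1 / sqrt (2 * pi)) * exp (- x\<^sup>2 / 2) \<le> 1 * 1"
    by (intro mult_mono) auto
  then show ?thesis by (simp add: std_normal_density_def)
qed

lemma Phi_lip_aux: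
  assumes "a \<le> b"
  shows "cdf std_normal_distribution b - cdf std_normal_distribution a \<le> b - a"
proof (cases "a = b")
  case True then show ?thesis by simp
next
  case False
  then have ab: "a < b" using assms by simp
  interpret real_distribution std_normal_distribution by (rule real_dist_normal_dist)
  have "cdf std_normal_distribution b - cdf std_normal_distribution a = measure std_normal_distribution {a<..b}"
    by (rule cdf_diff_eq[OF ab])
  also have "\<dots> \<le> b - a"
  proof -
    have "emeasure std_normal_distribution {a<..b} = (\<integral>\<^sup>+x. ennreal (std_normal_density x) * indicator {a<..b} x \<partial>lborel)"
      by (subst emeasure_density) auto
    also have "\<dots> \<le> (\<integral>\<^sup>+x. indicator {a<..b} x \<partial>lborel)"
      by (intro nn_integral_mono) (auto simp: indicator_def std_density_le1)
    also have "\<dots> = ennreal (b - a)" using ab by simp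
    finally have "emeasure std_normal_distribution {a<..b} \<le> ennreal (b - a)" .
    then show ?thesis using ab
      by (simp add: measure_def enn2real_leI)
  qed
  finally show ?thesis .
qed

lemma Phi_lip: "\<bar>cdf std_normal_distribution x - cdf std_normal_distribution y\<bar> \<le> \<bar>x - y\<bar>"
proof -
  interpret real_distribution std_normal_distribution by (rule real_dist_normal_dist)
  show ?thesis
  proof (cases "x \<le> y")
    case True
    then show ?thesis using Phi_lip_aux[of x y] cdf_nondecreasing[of x y] by simp
  next
    case False
    then show ?thesis using Phi_lip_aux[of y x] cdf_nondecreasing[of y x] by simp
  qed
qed



lemma polya:
  fixes F :: "nat \<Rightarrow> real \<Rightarrow> real" and G :: "real \<Rightarrow> real"
  assumes mono: "\<And>n x y. x \<le> y \<Longrightarrow> F n x \<le> F n y"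
  and F01: "\<And>n x. 0 \<le> F n x \<and> F n x \<le> 1"
  and G01: "\<And>x. 0 \<le> G x \<and> G x \<le> 1"
  and conv: "\<And>x. (\<lambda>n. F n x) \<longlonglongrightarrow> G x"
  and lip: "\<And>x y. \<bar>G x - G y\<bar> \<le> \<bar>x - y\<bar>"
  and bot: "(G \<longlongrightarrow> 0) at_bot" and top: "(G \<longlongrightarrow> 1) at_top"
  and e: "e > 0"
  shows "eventually (\<lambda>n. \<forall>x. \<bar>F n x - G x\<bar> \<le> 2 * e) sequentially"
proof -
  have "eventually (\<lambda>x. G x < e) at_bot" using order_tendstoD(2)[OF bot] e by simp
  then obtain K1 where K1: "\<And>x. x \<le> K1 \<Longrightarrow> G x < e" by (auto simp: eventually_at_bot_linorder)
  have "eventually (\<lambda>x. G x > 1 - e) at_top" using order_tendstoD(1)[OF top] e by simp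
  then obtain K2 where K2: "\<And>x. x \<ge> K2 \<Longrightarrow> G x > 1 - e" by (auto simp: eventually_at_top_linorder)
  define a where "a = min K1 K2"
  define w where "w j = a + real j * e" for j :: nat
  define N where "N = nat (ceiling ((K2 - a) / e))"
  have wN: "w N \<ge> K2"
  proof -
    have "(K2 - a) / e \<le> real N" unfolding N_def by linarith
    then have "K2 - a \<le> real N * e" using e by (simp add: divide_le_eq)
    then show ?thesis by (simp add: w_def)
  qed
  have "eventually (\<lambda>n. \<forall>j\<in>{..N}. \<bar>F n (w j) - G (w j)\<bar> < e) sequentially"
  proof (rule eventually_ball_finite)
    show "\<forall>j\<in>{..N}. eventually (\<lambda>n. \<bar>F n (w j) - G (w j)\<bar> < e) sequentially"
      using tendstoD[OF conv e] by (simp add: dist_real_def)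
  qed simp
  then show ?thesis
  proof (rule eventually_mono)
    fix n assume H: "\<forall>j\<in>{..N}. \<bar>F n (w j) - G (w j)\<bar> < e"
    show "\<forall>x. \<bar>F n x - G x\<bar> \<le> 2 * e"
    proof
      fix x
      show "\<bar>F n x - G x\<bar> \<le> 2 * e"
      proof (cases "x < a")
        case True
        have "F n x \<le> F n (w 0)" using True mono by (simp add: w_def)
        moreover have "\<bar>F n (w 0) - G (w 0)\<bar> < e" using H by auto
        moreover have "G (w 0) < e" using K1 by (simp add: w_def a_def)
        moreover have "G x < e" using K1 True by (simp add: a_def)
        ultimately show ?thesis using F01[of n x] G01[of x] by linarith
      next
        case False
        show ?thesis
        proof (cases "x \<ge> w N")
          case True
          have "F n (w N) \<le> F n x" using True mono by simp
          moreover have "\<bar>F n (w N) - G (w N)\<bar> < e" using H by auto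
          moreover have "G (w N) > 1 - e" using K2 wN by simp
          moreover have "G x > 1 - e" using K2 wN True by simp
          ultimately show ?thesis using F01[of n x] G01[of x] by linarith
        next
          case False2: False
          define j where "j = nat (floor ((x - a) / e))"
          have nonneg: "(x - a) / e \<ge> 0" using False e by simp
          have j1: "real j \<le> (x - a) / e" using nonneg unfolding j_def by linarith
          have j2: "(x - a) / e < real j + 1" using nonneg unfolding j_def by linarith
          have wj: "w j \<le> x" using j1 e by (simp add: w_def le_divide_eq algebra_simps)
          have wj1: "x < w (Suc j)" using j2 e by (simp add: w_def divide_less_eq algebra_simps)
          have "j < N"
          proof (rule ccontr)
            assume "\<not> j < N"
            then have "real N * e \<le> real j * e" using e by simp
            then have "w N \<le> w j" by (simp add: w_def)
            then show False using wj False2 by simp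
          qed
          have A: "\<bar>F n (w j) - G (w j)\<bar> < e" using H \<open>j < N\<close> by auto
          have B: "\<bar>F n (w (Suc j)) - G (w (Suc j))\<bar> < e" using H \<open>j < N\<close> by auto
          have C: "\<bar>G (w j) - G x\<bar> \<le> e" using lip[of "w j" x] wj wj1 by (simp add: w_def algebra_simps)
          have D: "\<bar>G (w (Suc j)) - G x\<bar> \<le> e" using lip[of "w (Suc j)" x] wj wj1 by (simp add: w_def algebra_simps)
          have "F n (w j) \<le> F n x" "F n x \<le> F n (w (Suc j))" using wj wj1 mono by auto
          then show ?thesis using A B C D by linarith
        qed
      qed
    qed
  qed
qed


lemma sig_inf:
  fixes p :: "nat \<Rightarrow> real"
  assumes p: "\<And>n. 0 < p n \<and> p n < 1"
    and h: "filterlim (\<lambda>n. real n powr (1/9) * p n * (1 - p n) powr (1/3)) at_top sequentially"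
  shows "filterlim (\<lambda>n. real n * p n * (1 - p n)) at_top sequentially"
proof (rule filterlim_at_top_mono[OF h])
  have "eventually (\<lambda>n. real n powr (1/9) * p n * (1 - p n) powr (1/3) \<ge> 1) sequentially"
    using h by (simp add: filterlim_at_top)
  then show "eventually (\<lambda>n. real n powr (1/9) * p n * (1 - p n) powr (1/3) \<le> real n * p n * (1 - p n)) sequentially"
  proof (rule eventually_mono)
    fix n assume a1: "real n powr (1/9) * p n * (1 - p n) powr (1/3) \<ge> 1"
    define a where "a = real n powr (1/9) * p n * (1 - p n) powr (1/3)"
    have pn: "0 < p n" "p n < 1" using p[of n] by auto
    have "n \<noteq> 0" using a1 by (cases "n = 0") auto
    then have n0: "real n > 0" by simp
    have "a ^ 9 = (real n powr (1/9)) ^ 9 * p n ^ 9 * ((1 - p n) powr (1/3)) ^ 9"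
      by (simp add: a_def power_mult_distrib)
    also have "(real n powr (1/9)) ^ 9 = real n"
    proof -
      have "(real n powr (1/9)) ^ 9 = real n powr (of_nat 9 * (1/9))"
        using n0 by (intro powr_power) auto
      also have "\<dots> = real n" using n0 by simp
      finally show ?thesis .
    qed
    also have "((1 - p n) powr (1/3)) ^ 9 = (1 - p n) ^ 3"
    proof -
      have "((1 - p n) powr (1/3)) ^ 9 = (1 - p n) powr (1/3 * 9)"
        using pn by (simp add: powr_power)
      also have "\<dots> = (1 - p n) powr (real 3)" by simp
      also have "\<dots> = (1 - p n) ^ 3" using pn by (subst powr_realpow) auto
      finally show ?thesis .
    qed
    finally have a9: "a ^ 9 = real n * p n ^ 9 * (1 - p n) ^ 3" .
    have "p n ^ 9 \<le> p n ^ 1" using pn by (intro power_decreasing) auto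
    moreover have "(1 - p n) ^ 3 \<le> (1 - p n) ^ 1" using pn by (intro power_decreasing) auto
    ultimately have "a ^ 9 \<le> real n * p n * (1 - p n)"
      unfolding a9 using n0 pn by (intro mult_mono) (auto)
    moreover have "a \<le> a ^ 9" using a1 unfolding a_def[symmetric] by (intro order_trans[OF _ power_increasing[of 1 9 a]]) auto
    ultimately show "a \<le> real n * p n * (1 - p n)" by linarith
  qed
qed


lemma cheb:
  fixes p s M :: real
  assumes p: "0 \<le> p" "p \<le> 1" and s: "s > 0" "s^2 = real n * p * (1 - p)" and M: "M > 0"
  shows "measure_pmf.prob (binomial_pmf n p) {k. M < \<bar>(real k - real n * p) / s\<bar>} \<le> 1 / M^2"
proof -
  define S where "S = {k. M < \<bar>(real k - real n * p) / s\<bar>}"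
  define W where "W k = real (n choose k) * p^k * (1-p)^(n-k)" for k
  have W0: "W k \<ge> 0" for k using p by (simp add: W_def)
  have "measure_pmf.prob (binomial_pmf n p) S = measure_pmf.expectation (binomial_pmf n p) (indicator S)"
    by simp
  also have "\<dots> = (\<Sum>k\<le>n. W k * indicator S k)"
    unfolding W_def by (rule binom_expect[OF p])
  also have "\<dots> \<le> (\<Sum>k\<le>n. W k * ((real k - real n * p)^2 / (s^2 * M^2)))"
  proof (rule sum_mono)
    fix k
    have "indicator S k \<le> (real k - real n * p)^2 / (s^2 * M^2)"
    proof (cases "k \<in> S")
      case True
      then have "M < \<bar>real k - real n * p\<bar> / s" using s by (simp add: S_def abs_divide)
      then have "M * s < \<bar>real k - real n * p\<bar>" using s by (simp add: less_divide_eq)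
      then have "(M * s)^2 < \<bar>real k - real n * p\<bar>^2" using M s by (intro power_strict_mono) auto
      then have "s^2 * M^2 \<le> (real k - real n * p)^2" by (simp add: power_mult_distrib mult.commute)
      moreover have "0 < s^2 * M^2" using s(1) M by simp
      ultimately show ?thesis using True by (simp add: le_divide_eq_1_pos)
    qed simp
    then show "W k * indicator S k \<le> W k * ((real k - real n * p)^2 / (s^2 * M^2))"
      using W0 by (intro mult_left_mono) auto
  qed
  also have "\<dots> = (\<Sum>k\<le>n. W k * (real k - real n * p)^2) / (s^2 * M^2)"
    by (simp add: sum_divide_distrib)
  also have "(\<Sum>k\<le>n. W k * (real k - real n * p)^2) = real n * p * (1 - p)"
    using binom_var[OF p, of n] binom_expect[OF p, of n "\<lambda>k. (real k - real n * p)^2"] by (simp add: W_def)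
  also have "real n * p * (1 - p) / (s^2 * M^2) = 1 / M^2"
    using s M by (simp flip: s(2))
  finally show ?thesis by (simp add: S_def)
qed

lemma aux_vform:
  fixes v m X :: real
  assumes "m \<noteq> 0"
  shows "v * m^2 / 4 * (1 + X / m^2) = v / 4 * (m^2 + X)"
  using assms by (simp add: field_simps)

lemma aux_e1:
  fixes m s Y :: real
  assumes "m \<noteq> 0"
  shows "s * m / 2 * (s / m * Y) = s^2 * Y / 2"
  using assms by (simp add: field_simps power2_eq_square)

lemma aux_teq:
  fixes x :: nat and \<sigma> \<mu> v :: real
  assumes "\<sigma> > 0" "2 * \<mu> + 1 > 0" "\<sigma>^2 = v"
  shows "regions x - (1 + (v + \<mu>^2 + \<mu>) / 2) =
    \<sigma> * (2 * \<mu> + 1) / 2 * ((real x - \<mu>) / \<sigma> + \<sigma> / (2 * \<mu> + 1) * (((real x - \<mu>) / \<sigma>)^2 - 1))"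
proof -
  have "\<sigma> * (2 * \<mu> + 1) / 2 * ((real x - \<mu>) / \<sigma>) = (2 * \<mu> + 1) * (real x - \<mu>) / 2"
    using assms by simp
  moreover have "\<sigma> * (2 * \<mu> + 1) / 2 * (\<sigma> / (2 * \<mu> + 1) * (((real x - \<mu>) / \<sigma>)^2 - 1)) = ((real x - \<mu>)^2 - v) / 2"
  proof -
    have e1: "\<sigma> * (2 * \<mu> + 1) / 2 * (\<sigma> / (2 * \<mu> + 1) * Y) = \<sigma>^2 * Y / 2" for Y
      using aux_e1[of "2 * \<mu> + 1" \<sigma> Y] assms(2) by simp
    have e2: "\<sigma>^2 * (((real x - \<mu>) / \<sigma>)^2 - 1) = (real x - \<mu>)^2 - \<sigma>^2"
      using assms(1) by (simp add: power_divide right_diff_distrib)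
    show ?thesis unfolding e1 unfolding e2 unfolding assms(3) ..
  qed
  ultimately have "\<sigma> * (2 * \<mu> + 1) / 2 * ((real x - \<mu>) / \<sigma> + \<sigma> / (2 * \<mu> + 1) * (((real x - \<mu>) / \<sigma>)^2 - 1))
      = (2 * \<mu> + 1) * (real x - \<mu>) / 2 + ((real x - \<mu>)^2 - v) / 2"
    by (simp only: distrib_left)
  moreover have "regions x - (1 + (v + \<mu>^2 + \<mu>) / 2) = (2 * \<mu> + 1) * (real x - \<mu>) / 2 + ((real x - \<mu>)^2 - v) / 2"
    by (simp add: regions_def field_simps power2_eq_square)
  ultimately show ?thesis by simp
qed

theorem theorem4:
  fixes p :: "nat \<Rightarrow> real"
  assumes "\<And>n. 0 < p n \<and> p n < 1"
    and "filterlim (\<lambda>n. real n powr (1/9) * p n * (1 - p n) powr (1/3)) at_top sequentially"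
  shows "(\<lambda>n. SUP w::real. \<bar>measure_pmf.prob (binomial_pmf n (p n))
            {x. (regions x - measure_pmf.expectation (binomial_pmf n (p n)) regions)
                 / sqrt (measure_pmf.variance (binomial_pmf n (p n)) regions) \<le> w} - Phi w\<bar>)
         \<longlonglongrightarrow> 0"
proof -
  note pa = assms(1)
  have pn: "0 < p n" "p n < 1" for n using pa[of n] by auto
  have p01: "0 \<le> p n" "p n \<le> 1" for n using pn[of n] by auto
  define P where "P n = binomial_pmf n (p n)" for n
  define \<mu> where "\<mu> n = real n * p n" for n
  define v where "v n = real n * p n * (1 - p n)" for n
  define \<sigma> where "\<sigma> n = sqrt (v n)" for n
  define z where "z n k = (real k - \<mu> n) / \<sigma> n" for n k
  define G where "G n w = measure_pmf.prob (P n) {k. z n k \<le> w}" for n w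
  define E where "E n = measure_pmf.expectation (P n) regions" for n
  define V where "V n = measure_pmf.variance (P n) regions" for n
  define H where "H n w = measure_pmf.prob (P n) {x. (regions x - E n) / sqrt (V n) \<le> w}" for n w
  define \<Phi> where "\<Phi> = cdf std_normal_distribution"
  interpret N: real_distribution std_normal_distribution by (rule real_dist_normal_dist)
  have v0: "v n \<ge> 0" for n using pn[of n] by (simp add: v_def)
  have vinf: "filterlim v at_top sequentially"
    unfolding v_def by (rule sig_inf[OF pa assms(2)])
  have vmu: "v n \<le> \<mu> n" for n
    using pn[of n] by (simp add: v_def \<mu>_def mult_left_le)
  have muinf: "filterlim \<mu> at_top sequentially"
    by (rule filterlim_at_top_mono[OF vinf]) (use vmu in auto)
  have mu0: "\<mu> n \<ge> 0" for n using pn[of n] by (simp add: \<mu>_def)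

  have isc: "isCont \<Phi> x" for x
    unfolding isCont_def LIM_eq
  proof (intro allI impI)
    fix r :: real assume r: "0 < r"
    show "\<exists>s>0. \<forall>y. y \<noteq> x \<and> norm (y - x) < s \<longrightarrow> norm (\<Phi> y - \<Phi> x) < r"
    proof (intro exI[of _ r] conjI allI impI)
      fix y assume "y \<noteq> x \<and> norm (y - x) < r"
      then show "norm (\<Phi> y - \<Phi> x) < r"
        using Phi_lip[of y x] unfolding \<Phi>_def real_norm_def by linarith
    qed (rule r)
  qed
  have Gconv: "(\<lambda>n. G n w) \<longlonglongrightarrow> \<Phi> w" for w
  proof -
    define M where "M n = distr (measure_pmf (P n)) borel (z n)" for n
    have rd: "real_distribution (M n)" for n
      unfolding M_def by (rule prob_space.real_distribution_distr[OF prob_space_measure_pmf]) (simp add: measurable_pmf_measure1)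
    have "weak_conv_m M std_normal_distribution"
    proof (rule levy_continuity[OF rd real_dist_normal_dist])
      fix t
      show "(\<lambda>n. char (M n) t) \<longlonglongrightarrow> char std_normal_distribution t"
        using char_conv[OF pa vinf[unfolded v_def], of t]
        by (simp add: M_def z_def[abs_def] \<sigma>_def v_def \<mu>_def P_def)
    qed
    then have "(\<lambda>n. cdf (M n) w) \<longlonglongrightarrow> \<Phi> w"
      using isc[of w] unfolding weak_conv_m_def weak_conv_def \<Phi>_def by blast
    moreover have "cdf (M n) w = G n w" for n
      unfolding cdf_def M_def G_def
      by (subst measure_distr) (auto simp: measurable_pmf_measure1 vimage_def)
    ultimately show ?thesis by simp
  qed

  have unif: "eventually (\<lambda>n. \<forall>w. \<bar>G n w - \<Phi> w\<bar> \<le> 2 * e) sequentially" if e: "e > 0" for e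
  proof (rule polya[OF _ _ _ Gconv _ _ _ e])
    show "G n x \<le> G n y" if "x \<le> y" for n x y
      unfolding G_def using that by (intro measure_pmf.finite_measure_mono) auto
    show "0 \<le> G n x \<and> G n x \<le> 1" for n x
      unfolding G_def by simp
    show "0 \<le> \<Phi> x \<and> \<Phi> x \<le> 1" for x
      unfolding \<Phi>_def using N.cdf_nonneg N.cdf_bounded_prob by auto
    show "\<bar>\<Phi> x - \<Phi> y\<bar> \<le> \<bar>x - y\<bar>" for x y unfolding \<Phi>_def by (rule Phi_lip)
    show "(\<Phi> \<longlongrightarrow> 0) at_bot" unfolding \<Phi>_def by (rule N.cdf_lim_at_bot)
    show "(\<Phi> \<longlongrightarrow> 1) at_top" unfolding \<Phi>_def by (rule N.cdf_lim_at_top_prob)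
  qed

  define A where "A n = \<sigma> n * (2 * \<mu> n + 1) / 2" for n
  define r where "r n = (2 * (1 - 2 * p n) * (2 * \<mu> n + 1) + 2 * v n + 1 - 6 * p n * (1 - p n)) / (2 * \<mu> n + 1)^2" for n
  define s where "s n = sqrt (1 + r n)" for n
  define c where "c n = \<sigma> n / (2 * \<mu> n + 1)" for n
  have Eform: "E n = 1 + (v n + \<mu> n ^ 2 + \<mu> n) / 2" for n
    unfolding E_def P_def v_def \<mu>_def using regions_mean[OF p01(1)[of n] p01(2)[of n], of n] by (simp add: mult.assoc)
  have Vform: "V n = A n ^ 2 * (1 + r n)" for n
  proof -
    have "V n = v n / 4 * ((2 * \<mu> n + 1)^2 + 2 * (1 - 2 * p n) * (2 * \<mu> n + 1) + 2 * v n + 1 - 6 * p n * (1 - p n))"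
      unfolding V_def P_def v_def \<mu>_def using regions_var[OF p01(1)[of n] p01(2)[of n], of n] by (simp add: mult.assoc)
    moreover have "\<sigma> n ^ 2 = v n" using v0[of n] by (simp add: \<sigma>_def)
    moreover have "2 * \<mu> n + 1 > 0" using mu0[of n] by simp
    moreover have "A n ^ 2 = \<sigma> n ^ 2 * (2 * \<mu> n + 1)^2 / 4" by (simp add: A_def power_mult_distrib power_divide)
    ultimately show ?thesis
    proof -
      assume V: "V n = v n / 4 * ((2 * \<mu> n + 1)^2 + 2 * (1 - 2 * p n) * (2 * \<mu> n + 1) + 2 * v n + 1 - 6 * p n * (1 - p n))"
        and s2: "\<sigma> n ^ 2 = v n" and m: "2 * \<mu> n + 1 > 0" and hA: "A n ^ 2 = \<sigma> n ^ 2 * (2 * \<mu> n + 1)^2 / 4"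
      define X where "X = 2 * (1 - 2 * p n) * (2 * \<mu> n + 1) + 2 * v n + 1 - 6 * p n * (1 - p n)"
      have "A n ^ 2 * (1 + r n) = v n * (2 * \<mu> n + 1)^2 / 4 * (1 + X / (2 * \<mu> n + 1)^2)"
        unfolding hA s2 r_def X_def ..
      also have "\<dots> = v n / 4 * ((2 * \<mu> n + 1)^2 + X)" by (rule aux_vform) (use m in simp)
      also have "\<dots> = V n" unfolding V X_def by (simp add: algebra_simps)
      finally show ?thesis ..
    qed
  qed
  have rbound: "\<bar>r n\<bar> \<le> 4 / (2 * \<mu> n + 1)" for n
  proof -
    define m where "m = 2 * \<mu> n + 1"
    have m1: "m \<ge> 1" using mu0[of n] by (simp add: m_def)
    have pq1: "0 \<le> p n * (1 - p n)" using pn[of n] by simp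
    have sq: "0 \<le> (p n - 1/2) * (p n - 1/2)" by simp
    have pq2: "p n * (1 - p n) \<le> 1/4" using sq by (simp add: algebra_simps)
    note pq = pq1 pq2
    have "\<bar>2 * (1 - 2 * p n) * m + 2 * v n + 1 - 6 * p n * (1 - p n)\<bar> \<le> 2 * m + m + 1"
    proof -
      have a: "\<bar>2 * (1 - 2 * p n) * m\<bar> \<le> 2 * m" using pn[of n] m1 by (simp add: abs_mult)
      have b: "0 \<le> 2 * v n" "2 * v n \<le> m" using v0[of n] vmu[of n] by (auto simp: m_def)
      have c: "\<bar>1 - 6 * p n * (1 - p n)\<bar> \<le> 1" using pq by auto
      show ?thesis using a b c by linarith
    qed
    also have "\<dots> \<le> 4 * m" using m1 by simp
    finally have "\<bar>r n\<bar> \<le> 4 * m / m^2"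
      using m1 by (simp add: r_def m_def[symmetric] abs_divide divide_right_mono)
    also have "4 * m / m^2 = 4 / m" using m1 by (simp add: power2_eq_square)
    finally show ?thesis by (simp add: m_def)
  qed
  have inv0: "(\<lambda>n. 4 / (2 * \<mu> n + 1)) \<longlonglongrightarrow> 0"
  proof (rule tendsto_divide_0[OF tendsto_const])
    show "filterlim (\<lambda>n. 2 * \<mu> n + 1) at_infinity sequentially"
    proof (rule filterlim_at_top_imp_at_infinity)
      show "filterlim (\<lambda>n. 2 * \<mu> n + 1) at_top sequentially"
        by (rule filterlim_at_top_mono[OF muinf]) (use mu0 in \<open>auto intro!: always_eventually\<close>)
    qed
  qed
  have r0: "r \<longlonglongrightarrow> 0"
    by (rule Lim_null_comparison[OF _ inv0]) (use rbound in auto)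
  have s1: "s \<longlonglongrightarrow> 1"
    unfolding s_def using tendsto_real_sqrt[OF tendsto_add[OF tendsto_const r0, of 1]] by simp
  have cbound: "0 \<le> c n \<and> c n \<le> sqrt (1 / (2 * \<mu> n + 1))" for n
  proof -
    have m1: "2 * \<mu> n + 1 \<ge> 1" using mu0[of n] by simp
    have "c n = sqrt (v n / (2 * \<mu> n + 1)^2)"
      using m1 by (simp add: c_def \<sigma>_def real_sqrt_divide)
    also have "v n / (2 * \<mu> n + 1)^2 \<le> 1 / (2 * \<mu> n + 1)"
    proof -
      have m: "2 * \<mu> n + 1 > 0" using m1 by simp
      have "v n \<le> 2 * \<mu> n + 1" using vmu[of n] mu0[of n] by linarith
      then have "v n / (2 * \<mu> n + 1) \<le> 1" using m by simp
      then have "v n / (2 * \<mu> n + 1) / (2 * \<mu> n + 1) \<le> 1 / (2 * \<mu> n + 1)" using m by (intro divide_right_mono) auto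
      then show ?thesis by (simp add: power2_eq_square)
    qed
    finally have "c n \<le> sqrt (1 / (2 * \<mu> n + 1))" using real_sqrt_le_mono by (smt (verit))
    moreover have "c n \<ge> 0" using m1 v0[of n] unfolding c_def \<sigma>_def by (intro divide_nonneg_nonneg) auto
    ultimately show ?thesis by simp
  qed
  have c0: "c \<longlonglongrightarrow> 0"
  proof (rule tendsto_sandwich[of "\<lambda>_. 0" _ _ "\<lambda>n. sqrt (1 / (2 * \<mu> n + 1))"])
    show "eventually (\<lambda>n. 0 \<le> c n) sequentially" "eventually (\<lambda>n. c n \<le> sqrt (1 / (2 * \<mu> n + 1))) sequentially"
      using cbound by auto
    have "(\<lambda>n. 1 / (2 * \<mu> n + 1)) \<longlonglongrightarrow> 0"
      using tendsto_mult[OF tendsto_const[of "1/4"] inv0] by simp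
    then show "(\<lambda>n. sqrt (1 / (2 * \<mu> n + 1))) \<longlonglongrightarrow> 0"
      using tendsto_real_sqrt by fastforce
  qed simp

  have key: "eventually (\<lambda>n. \<forall>w. \<bar>H n w - \<Phi> w\<bar> \<le> 4 * e) sequentially" if e: "e > 0" for e
  proof -
    define M where "M = max 1 (1 / e)"
    have M1: "M \<ge> 1" and Me: "M \<ge> 1 / e" by (auto simp: M_def)
    have invM: "1 / M^2 \<le> e"
    proof -
      have "1 / M^2 \<le> 1 / M" using M1 by (simp add: power2_eq_square divide_le_eq_1 field_simps)
      also have "1 / M \<le> 1 / (1 / e)" using Me e M1 by (intro divide_left_mono) auto
      also have "\<dots> = e" by simp
      finally show ?thesis .
    qed
    define err where "err n = M * \<bar>1 / s n - 1\<bar> + c n * (M^2 + 1) / s n" for n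
    have err0: "err \<longlonglongrightarrow> 0"
    proof -
      have "(\<lambda>n. 1 / s n) \<longlonglongrightarrow> 1 / 1" by (rule tendsto_divide[OF tendsto_const s1]) simp
      then have "(\<lambda>n. M * \<bar>1 / s n - 1\<bar> + c n * (M^2 + 1) / s n) \<longlonglongrightarrow> M * \<bar>1 / 1 - 1\<bar> + 0 * (M^2 + 1) / 1"
        by (intro tendsto_intros c0 s1) auto
      then show ?thesis by (simp add: err_def[abs_def])
    qed
    have ev1: "eventually (\<lambda>n. err n < e) sequentially" using order_tendstoD(2)[OF err0 e] .
    have ev2: "eventually (\<lambda>n. s n > 0) sequentially" using order_tendstoD(1)[OF s1, of 0] by simp
    have ev3: "eventually (\<lambda>n. v n > 0) sequentially" using vinf by (simp add: filterlim_at_top_dense)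
    show ?thesis
      using unif[OF e] ev1 ev2 ev3
    proof eventually_elim
      case (elim n)
      note U = elim(1) and errn = elim(2) and sn = elim(3) and vn = elim(4)
      have sig: "\<sigma> n > 0" using vn by (simp add: \<sigma>_def)
      have mpos: "2 * \<mu> n + 1 > 0" using mu0[of n] by simp
      have Apos: "A n > 0" using sig mpos by (simp add: A_def)
      have cn: "c n \<ge> 0" using cbound[of n] by simp
      have rpos: "1 + r n \<ge> 0" using sn unfolding s_def real_sqrt_gt_0_iff by simp
      have sqV: "sqrt (V n) = A n * s n"
        using Apos rpos by (simp add: Vform s_def real_sqrt_mult)
      have Teq: "(regions x - E n) / sqrt (V n) = (z n x + c n * (z n x ^ 2 - 1)) / s n" for x
      proof -
        have "\<sigma> n ^ 2 = v n" using v0[of n] by (simp add: \<sigma>_def)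
        then have "regions x - E n = A n * (z n x + c n * (z n x ^ 2 - 1))"
          using sig mpos unfolding Eform A_def c_def z_def by (intro aux_teq) auto


        then show ?thesis using sqV Apos sn by simp
      qed
      define C where "C = measure_pmf.prob (P n) {k. M < \<bar>z n k\<bar>}"
      have Cb: "C \<le> 1 / M^2"
      proof -
        have "measure_pmf.prob (binomial_pmf n (p n)) {k. M < \<bar>(real k - real n * p n) / sqrt (v n)\<bar>} \<le> 1 / M^2"
          by (rule cheb[where s = "sqrt (v n)" and M = M]) (use p01[of n] vn v0[of n] M1 in \<open>auto simp: v_def\<close>)
        then show ?thesis by (simp add: C_def P_def z_def \<mu>_def \<sigma>_def)
      qed
      have close: "\<bar>(regions x - E n) / sqrt (V n) - z n x\<bar> \<le> err n" if zx: "\<bar>z n x\<bar> \<le> M" for x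
      proof -
        define y where "y = z n x"
        have y2: "y^2 \<le> M^2" using zx by (simp add: y_def abs_le_square_iff[symmetric] abs_le_iff power2_abs)
        have "(regions x - E n) / sqrt (V n) - z n x = y * (1 / s n - 1) + c n * (y^2 - 1) / s n"
          using sn by (simp add: Teq y_def add_divide_distrib right_diff_distrib)
        also have "\<bar>\<dots>\<bar> \<le> \<bar>y\<bar> * \<bar>1 / s n - 1\<bar> + c n * \<bar>y^2 - 1\<bar> / s n"
        proof -
          have "\<bar>c n * (y^2 - 1) / s n\<bar> = c n * \<bar>y^2 - 1\<bar> / s n" using sn cn by (simp add: abs_mult abs_divide)
          then show ?thesis using abs_triangle_ineq[of "y * (1 / s n - 1)" "c n * (y^2 - 1) / s n"] by (simp add: abs_mult)
        qed
        also have "\<dots> \<le> M * \<bar>1 / s n - 1\<bar> + c n * (M^2 + 1) / s n"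
        proof (intro add_mono mult_right_mono divide_right_mono mult_left_mono)
          show "\<bar>y\<bar> \<le> M" using zx by (simp add: y_def)
          show "\<bar>y^2 - 1\<bar> \<le> M^2 + 1" unfolding abs_le_iff using y2 zero_le_power2[of y] by linarith
        qed (use sn cn in auto)
        finally show ?thesis by (simp add: err_def)
      qed
      show "\<forall>w. \<bar>H n w - \<Phi> w\<bar> \<le> 4 * e"
      proof
        fix w
        have up: "H n w \<le> G n (w + e) + C"
        proof -
          have "{x. (regions x - E n) / sqrt (V n) \<le> w} \<subseteq> {k. z n k \<le> w + e} \<union> {k. M < \<bar>z n k\<bar>}"
          proof
            fix x assume "x \<in> {x. (regions x - E n) / sqrt (V n) \<le> w}"
            then have a: "(regions x - E n) / sqrt (V n) \<le> w" by simp
            show "x \<in> {k. z n k \<le> w + e} \<union> {k. M < \<bar>z n k\<bar>}"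
            proof (cases "\<bar>z n x\<bar> \<le> M")
              case True
              then show ?thesis using close[OF True] errn a by auto
            qed auto
          qed
          then have "H n w \<le> measure_pmf.prob (P n) ({k. z n k \<le> w + e} \<union> {k. M < \<bar>z n k\<bar>})"
            unfolding H_def by (intro measure_pmf.finite_measure_mono) auto
          also have "\<dots> \<le> G n (w + e) + C"
            unfolding G_def C_def by (rule measure_Un_le) auto
          finally show ?thesis .
        qed
        have down: "G n (w - e) \<le> H n w + C"
        proof -
          have "{k. z n k \<le> w - e} \<subseteq> {x. (regions x - E n) / sqrt (V n) \<le> w} \<union> {k. M < \<bar>z n k\<bar>}"
          proof
            fix x assume "x \<in> {k. z n k \<le> w - e}"
            then have a: "z n x \<le> w - e" by simp
            show "x \<in> {x. (regions x - E n) / sqrt (V n) \<le> w} \<union> {k. M < \<bar>z n k\<bar>}"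
            proof (cases "\<bar>z n x\<bar> \<le> M")
              case True
              then show ?thesis using close[OF True] errn a by auto
            qed auto
          qed
          then have "G n (w - e) \<le> measure_pmf.prob (P n) ({x. (regions x - E n) / sqrt (V n) \<le> w} \<union> {k. M < \<bar>z n k\<bar>})"
            unfolding G_def by (intro measure_pmf.finite_measure_mono) auto
          also have "\<dots> \<le> H n w + C"
            unfolding H_def C_def by (rule measure_Un_le) auto
          finally show ?thesis .
        qed
        have l1: "\<bar>\<Phi> (w + e) - \<Phi> w\<bar> \<le> e" "\<bar>\<Phi> (w - e) - \<Phi> w\<bar> \<le> e"
          using Phi_lip[of "w + e" w] Phi_lip[of "w - e" w] e by (auto simp: \<Phi>_def)
        have "\<bar>G n (w + e) - \<Phi> (w + e)\<bar> \<le> 2 * e" "\<bar>G n (w - e) - \<Phi> (w - e)\<bar> \<le> 2 * e" using U by auto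
        then show "\<bar>H n w - \<Phi> w\<bar> \<le> 4 * e"
          using up down l1 Cb invM by linarith
      qed
    qed
  qed

  have Hb: "\<bar>H n w - \<Phi> w\<bar> \<le> 1" for n w
  proof -
    have "0 \<le> H n w" "H n w \<le> 1" unfolding H_def by auto
    moreover have "0 \<le> \<Phi> w" "\<Phi> w \<le> 1" unfolding \<Phi>_def using N.cdf_nonneg N.cdf_bounded_prob by auto
    ultimately show ?thesis by linarith
  qed
  have bdd: "bdd_above (range (\<lambda>w. \<bar>H n w - \<Phi> w\<bar>))" for n
    using Hb by (intro bdd_aboveI2) auto
  have "(\<lambda>n. SUP w. \<bar>H n w - \<Phi> w\<bar>) \<longlonglongrightarrow> 0"
  proof (rule tendstoI)
    fix \<epsilon> :: real assume \<epsilon>: "\<epsilon> > 0"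
    have "eventually (\<lambda>n. \<forall>w. \<bar>H n w - \<Phi> w\<bar> \<le> 4 * (\<epsilon> / 5)) sequentially"
      using key[of "\<epsilon> / 5"] \<epsilon> by simp
    then show "eventually (\<lambda>n. dist (SUP w. \<bar>H n w - \<Phi> w\<bar>) 0 < \<epsilon>) sequentially"
    proof (rule eventually_mono)
      fix n assume h: "\<forall>w. \<bar>H n w - \<Phi> w\<bar> \<le> 4 * (\<epsilon> / 5)"
      have "(SUP w. \<bar>H n w - \<Phi> w\<bar>) \<le> 4 * (\<epsilon> / 5)"
        using h by (intro cSUP_least) auto
      moreover have "0 \<le> (SUP w. \<bar>H n w - \<Phi> w\<bar>)"
        using cSUP_upper[OF UNIV_I bdd[of n], of 0] by (smt (verit) abs_ge_zero)
      ultimately show "dist (SUP w. \<bar>H n w - \<Phi> w\<bar>) 0 < \<epsilon>" using \<epsilon> by simp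
    qed
  qed
  then show ?thesis
    by (simp add: H_def E_def V_def P_def \<Phi>_def Phi_def[abs_def])
qed

end
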